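(* Let $H$ be the lower Vietoris monad on $\mathbf{Top}$. For every topological space $X$, the equalizer of $\eta_{HX},H\eta_X:HX\to HHX$ is the subspace $DX\subseteq HX$ consisting of the irreducible closed subsets of $X$, with $\theta_X:DX\to HX$ the inclusion.
   Context: $HX$ is the set of closed subsets of $X$ (including $\emptyset$) with topology generated by the sets $\{C: C\cap U\neq\emptyset\}$ for $U\subseteq X$ open; $\eta_X(x)=\overline{\{x\}}$; $\mu_X(\mathcal{C})=\overline{\bigcup_{C\in\mathcal{C}}C}$; $Hf(C)=\overline{f(C)}$. A closed subset $C$ is irreducible if it is nonempty and is not the union of two closed proper subsets of $C$. *)

theory Defs
  imports "HOL-Analysis.Analysis"
begin

text \<open>The whole carrier is added
  to the subbasis so that the empty set belongs to the topspace (it is open anyway).\<close>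
definition lower_vietoris :: "'a topology \<Rightarrow> 'a set topology" where
  "lower_vietoris X = topology_generated_by
     (insert {C. closedin X C} {{C. closedin X C \<and> C \<inter> U \<noteq> {}} | U. openin X U})"

definition vietoris_unit :: "'a topology \<Rightarrow> 'a \<Rightarrow> 'a set" where
  "vietoris_unit X x = X closure_of {x}"

definition vietoris_map :: "'b topology \<Rightarrow> ('a \<Rightarrow> 'b) \<Rightarrow> 'a set \<Rightarrow> 'b set" where
  "vietoris_map Y f C = Y closure_of (f ` C)"

definition irreducible_closed :: "'a topology \<Rightarrow> 'a set \<Rightarrow> bool" where
  "irreducible_closed X C \<longleftrightarrow> closedin X C \<and> C \<noteq> {} \<and>
     \<not> (\<exists>A B. closedin X A \<and> closedin X B \<and> A \<subset> C \<and> B \<subset> C \<and> C = A \<union> B)"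

definition irreducible_space :: "'a topology \<Rightarrow> 'a set topology" where
  "irreducible_space X = subtopology (lower_vietoris X) {C. irreducible_closed X C}"

end

theory Submission
  imports Defs
begin

abbreviation LVS :: "'a topology \<Rightarrow> 'a set set set" where
  "LVS X \<equiv> insert {C. closedin X C} {{C. closedin X C \<and> C \<inter> U \<noteq> {}} | U. openin X U}"

lemma LV_topspace: "topspace (lower_vietoris X) = {C. closedin X C}"
  unfolding lower_vietoris_def by auto

lemma LV_open_iff: "openin (lower_vietoris X) W \<longleftrightarrow> generate_topology_on (LVS X) W"
  unfolding lower_vietoris_def by (rule openin_topology_generated_by_iff)

lemma LV_sub_open: "openin X U \<Longrightarrow> openin (lower_vietoris X) {C. closedin X C \<and> C \<inter> U \<noteq> {}}"
  unfolding lower_vietoris_def by (rule topology_generated_by_Basis) auto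

lemma LV_basic_gen:
  assumes "generate_topology_on (LVS X) W" "D \<in> W"
  shows "\<exists>F. finite F \<and> (\<forall>U\<in>F. openin X U \<and> D \<inter> U \<noteq> {})
              \<and> {E. closedin X E \<and> (\<forall>U\<in>F. E \<inter> U \<noteq> {})} \<subseteq> W"
  using assms
proof (induction arbitrary: D rule: generate_topology_on.induct)
  case Empty
  then show ?case by simp
next
  case (Int a b)
  have "D \<in> a" "D \<in> b" using Int.prems by auto
  obtain F1 where F1: "finite F1" "\<forall>U\<in>F1. openin X U \<and> D \<inter> U \<noteq> {}"
    "{E. closedin X E \<and> (\<forall>U\<in>F1. E \<inter> U \<noteq> {})} \<subseteq> a"
    using Int.IH(1)[OF \<open>D \<in> a\<close>] by blast
  obtain F2 where F2: "finite F2" "\<forall>U\<in>F2. openin X U \<and> D \<inter> U \<noteq> {}"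
    "{E. closedin X E \<and> (\<forall>U\<in>F2. E \<inter> U \<noteq> {})} \<subseteq> b"
    using Int.IH(2)[OF \<open>D \<in> b\<close>] by blast
  have "finite (F1 \<union> F2)" using F1 F2 by simp
  moreover have "\<forall>U\<in>F1 \<union> F2. openin X U \<and> D \<inter> U \<noteq> {}" using F1 F2 by blast
  moreover have "{E. closedin X E \<and> (\<forall>U\<in>F1 \<union> F2. E \<inter> U \<noteq> {})} \<subseteq> a \<inter> b"
    using F1(3) F2(3) by blast
  ultimately show ?case by blast
next
  case (UN K)
  from UN.prems obtain k where k: "k \<in> K" "D \<in> k" by blast
  have "\<exists>F. finite F \<and> (\<forall>U\<in>F. openin X U \<and> D \<inter> U \<noteq> {})
              \<and> {E. closedin X E \<and> (\<forall>U\<in>F. E \<inter> U \<noteq> {})} \<subseteq> k"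
    using UN.IH[OF k(1)] k(2) by blast
  then obtain F where F: "finite F" "\<forall>U\<in>F. openin X U \<and> D \<inter> U \<noteq> {}"
     "{E. closedin X E \<and> (\<forall>U\<in>F. E \<inter> U \<noteq> {})} \<subseteq> k" by blast
  have "k \<subseteq> \<Union>K" using k by blast
  then have "{E. closedin X E \<and> (\<forall>U\<in>F. E \<inter> U \<noteq> {})} \<subseteq> \<Union>K" using F(3) by (rule order_trans[rotated])
  with F(1,2) show ?case by (intro exI[of _ F]) simp
next
  case (Basis s)
  then show ?case
  proof (cases "s = {C. closedin X C}")
    case True
    then show ?thesis by (intro exI[of _ "{}"]) auto
  next
    case False
    with Basis obtain U where "openin X U" "s = {C. closedin X C \<and> C \<inter> U \<noteq> {}}" by auto
    then show ?thesis using Basis by (intro exI[of _ "{U}"]) auto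
  qed
qed

lemma LV_basic:
  assumes "openin (lower_vietoris X) W" "D \<in> W"
  shows "\<exists>F. finite F \<and> (\<forall>U\<in>F. openin X U \<and> D \<inter> U \<noteq> {})
              \<and> {E. closedin X E \<and> (\<forall>U\<in>F. E \<inter> U \<noteq> {})} \<subseteq> W"
  by (rule LV_basic_gen[OF assms(1)[unfolded LV_open_iff] assms(2)])

lemma LV_closure_sub:
  assumes "closedin X D" "D \<subseteq> C" "closedin X C"
  shows "D \<in> lower_vietoris X closure_of {C}"
proof -
  have "C \<in> W" if hW: "openin (lower_vietoris X) W" "D \<in> W" for W
  proof -
    obtain F where F: "finite F" "\<forall>U\<in>F. openin X U \<and> D \<inter> U \<noteq> {}"
      "{E. closedin X E \<and> (\<forall>U\<in>F. E \<inter> U \<noteq> {})} \<subseteq> W"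
      using LV_basic[OF hW] by blast
    moreover have "\<forall>U\<in>F. C \<inter> U \<noteq> {}" using F(2) assms(2) by blast
    ultimately show ?thesis using assms(3) by blast
  qed
  then show ?thesis using assms by (auto simp: in_closure_of LV_topspace)
qed

lemma irr_meet:
  assumes "irreducible_closed X C" "finite F" "\<forall>U\<in>F. openin X U \<and> C \<inter> U \<noteq> {}"
  shows "C \<inter> (topspace X \<inter> \<Inter>F) \<noteq> {}"
  using assms(2,3)
proof (induction F rule: finite_induct)
  case empty
  have "C \<noteq> {}" "C \<subseteq> topspace X" using assms(1) closedin_subset unfolding irreducible_closed_def by auto
  then show ?case by auto
next
  case (insert U F)
  define V where "V = topspace X \<inter> \<Inter>F"
  have "openin X ((\<Inter>U\<in>F. U) \<inter> topspace X)" using openin_INT[where I=F and U="\<lambda>U. U" and T=X] insert by simp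
  then have oV: "openin X V" unfolding V_def by (simp add: Int_commute)
  have cV: "C \<inter> V \<noteq> {}" using insert V_def by auto
  have oU: "openin X U" "C \<inter> U \<noteq> {}" using insert by auto
  have cC: "closedin X C" using assms(1) unfolding irreducible_closed_def by auto
  show ?case
  proof
    assume "C \<inter> (topspace X \<inter> \<Inter>(insert U F)) = {}"
    then have e: "C \<inter> U \<inter> V = {}" unfolding V_def by auto
    have h1: "closedin X (C - U)" using cC oU by (simp add: closedin_diff)
    have h2: "closedin X (C - V)" using cC oV by (simp add: closedin_diff)
    have h3: "C - U \<subset> C" using oU by auto
    have h4: "C - V \<subset> C" using cV by auto
    have h5: "C = (C - U) \<union> (C - V)" using e by auto
    have nn: "\<forall>A B. \<not> (closedin X A \<and> closedin X B \<and> A \<subset> C \<and> B \<subset> C \<and> C = A \<union> B)"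
      using assms(1) unfolding irreducible_closed_def by simp
    have "\<not> (closedin X (C - U) \<and> closedin X (C - V) \<and> C - U \<subset> C \<and> C - V \<subset> C \<and> C = (C - U) \<union> (C - V))"
      using nn by blast
    then show False using h1 h2 h3 h4 h5 by simp
  qed
qed

lemma irr_in_closure:
  assumes "irreducible_closed X C"
  shows "C \<in> lower_vietoris X closure_of (vietoris_unit X ` C)"
proof -
  have cC: "closedin X C" using assms unfolding irreducible_closed_def by auto
  have "\<exists>y\<in>vietoris_unit X ` C. y \<in> W" if hW: "openin (lower_vietoris X) W" "C \<in> W" for W
  proof -
    obtain F where F: "finite F" "\<forall>U\<in>F. openin X U \<and> C \<inter> U \<noteq> {}"
      "{E. closedin X E \<and> (\<forall>U\<in>F. E \<inter> U \<noteq> {})} \<subseteq> W"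
      using LV_basic[OF hW] by blast
    have "C \<inter> (topspace X \<inter> \<Inter>F) \<noteq> {}" by (rule irr_meet[OF assms F(1,2)])
    then obtain x where x0: "x \<in> C \<inter> (topspace X \<inter> \<Inter>F)" by blast
    have x: "x \<in> C" "x \<in> topspace X" "\<forall>U\<in>F. x \<in> U" using x0 by simp_all
    have "{x} \<subseteq> X closure_of {x}" using x(2) by (intro closure_of_subset) simp
    then have xin: "x \<in> X closure_of {x}" by simp
    have "\<forall>U\<in>F. (X closure_of {x}) \<inter> U \<noteq> {}" using xin x(3) by blast
    then have "closedin X (X closure_of {x}) \<and> (\<forall>U\<in>F. (X closure_of {x}) \<inter> U \<noteq> {})"
      by simp
    then have "vietoris_unit X x \<in> W"
      using F(3) unfolding vietoris_unit_def by blast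
    then show ?thesis using x by auto
  qed
  then show ?thesis using cC by (auto simp: in_closure_of LV_topspace)
qed

lemma closure_irr:
  assumes "closedin X C" "C \<in> lower_vietoris X closure_of (vietoris_unit X ` C)"
  shows "irreducible_closed X C"
proof -
  have ne: "C \<noteq> {}"
  proof -
    have "openin (lower_vietoris X) (topspace (lower_vietoris X))" by simp
    then show ?thesis using assms by (auto simp: in_closure_of LV_topspace)
  qed
  {
    fix A B assume AB: "closedin X A" "closedin X B" "A \<subset> C" "B \<subset> C" "C = A \<union> B"
    define W where "W = {E. closedin X E \<and> E \<inter> (topspace X - A) \<noteq> {}} \<inter> {E. closedin X E \<and> E \<inter> (topspace X - B) \<noteq> {}}"
    have "openin (lower_vietoris X) W" unfolding W_def
      using AB by (intro openin_Int LV_sub_open) auto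
    moreover have "C \<in> W" unfolding W_def using AB assms(1) closedin_subset by fastforce
    ultimately obtain x where x: "x \<in> C" "vietoris_unit X x \<in> W"
      using assms(2) by (auto simp: in_closure_of)
    have sub: "X closure_of {x} \<subseteq> A" if "x \<in> A" "closedin X A" for A
      using that by (simp add: closure_of_minimal)
    have xW: "X closure_of {x} \<inter> (topspace X - A) \<noteq> {}" "X closure_of {x} \<inter> (topspace X - B) \<noteq> {}"
      using x(2) unfolding W_def vietoris_unit_def by auto
    have "x \<in> A \<or> x \<in> B" using x(1) AB(5) by blast
    then have False
    proof
      assume "x \<in> A" then have "X closure_of {x} \<subseteq> A" using sub AB(1) by blast
      then show False using xW(1) by blast
    next
      assume "x \<in> B" then have "X closure_of {x} \<subseteq> B" using sub AB(2) by blast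
      then show False using xW(2) by blast
    qed
  }
  then show ?thesis using assms(1) ne unfolding irreducible_closed_def by blast
qed

theorem theorem5p8:
  fixes X :: "'a topology"
  shows "continuous_map (irreducible_space X) (lower_vietoris X) (\<lambda>C. C)
   \<and> (\<forall>C\<in>topspace (irreducible_space X).
        vietoris_unit (lower_vietoris X) C
        = vietoris_map (lower_vietoris X) (vietoris_unit X) C)
   \<and> (\<forall>(Z :: 'z topology) f.
        continuous_map Z (lower_vietoris X) f
        \<and> (\<forall>z\<in>topspace Z. vietoris_unit (lower_vietoris X) (f z)
                          = vietoris_map (lower_vietoris X) (vietoris_unit X) (f z))
        \<longrightarrow> (\<exists>g. continuous_map Z (irreducible_space X) g
                \<and> (\<forall>z\<in>topspace Z. g z = f z)
                \<and> (\<forall>g'. continuous_map Z (irreducible_space X) g'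
                        \<and> (\<forall>z\<in>topspace Z. g' z = f z)
                        \<longrightarrow> (\<forall>z\<in>topspace Z. g' z = g z))))"
proof -
  have tsD: "topspace (irreducible_space X) = {C. irreducible_closed X C}"
  proof -
    have "irreducible_closed X C \<Longrightarrow> closedin X C" for C unfolding irreducible_closed_def by simp
    then show ?thesis unfolding irreducible_space_def topspace_subtopology LV_topspace by blast
  qed
  have P1: "continuous_map (irreducible_space X) (lower_vietoris X) (\<lambda>C. C)"
    unfolding irreducible_space_def by (simp add: continuous_map_from_subtopology)
  have P2: "lower_vietoris X closure_of {C} = lower_vietoris X closure_of (vietoris_unit X ` C)"
    if irr: "irreducible_closed X C" for C
  proof
    have cC: "closedin X C" using irr unfolding irreducible_closed_def by auto
    show "lower_vietoris X closure_of {C} \<subseteq> lower_vietoris X closure_of (vietoris_unit X ` C)"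
      by (rule closure_of_minimal) (use irr_in_closure[OF irr] in auto)
    have "vietoris_unit X ` C \<subseteq> lower_vietoris X closure_of {C}"
    proof
      fix D assume "D \<in> vietoris_unit X ` C"
      then obtain x where "x \<in> C" "D = X closure_of {x}" unfolding vietoris_unit_def by auto
      then show "D \<in> lower_vietoris X closure_of {C}"
        proof -
        have "{x} \<subseteq> C" using \<open>x \<in> C\<close> by simp
        then have "X closure_of {x} \<subseteq> C" using cC by (metis closure_of_minimal)
        then show ?thesis using cC \<open>D = X closure_of {x}\<close> by (simp add: LV_closure_sub)
      qed
    qed
    then show "lower_vietoris X closure_of (vietoris_unit X ` C) \<subseteq> lower_vietoris X closure_of {C}"
      by (rule closure_of_minimal) auto
  qed
  have P3: "irreducible_closed X (f z)"
    if f: "continuous_map Z (lower_vietoris X) f"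
      and eq: "\<forall>z\<in>topspace Z. vietoris_unit (lower_vietoris X) (f z)
                          = vietoris_map (lower_vietoris X) (vietoris_unit X) (f z)"
      and z: "z \<in> topspace Z"
    for Z :: "'z topology" and f z
  proof -
    have t: "f z \<in> topspace (lower_vietoris X)" using continuous_map_image_subset_topspace[OF f] z by blast
    then have "{f z} \<subseteq> lower_vietoris X closure_of {f z}" by (intro closure_of_subset) simp
    then have "f z \<in> lower_vietoris X closure_of {f z}" by simp
    moreover have "vietoris_unit (lower_vietoris X) (f z)
                          = vietoris_map (lower_vietoris X) (vietoris_unit X) (f z)" using eq z by blast
    then have "lower_vietoris X closure_of {f z} = lower_vietoris X closure_of (vietoris_unit X ` f z)"
      by (simp only: vietoris_unit_def[of "lower_vietoris X"] vietoris_map_def)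
    ultimately have "f z \<in> lower_vietoris X closure_of (vietoris_unit X ` f z)" by (rule back_subst)
    moreover have "closedin X (f z)" using t by (simp add: LV_topspace)
    ultimately show ?thesis by (intro closure_irr)
  qed
  show ?thesis
  proof (intro conjI allI impI ballI)
    show "continuous_map (irreducible_space X) (lower_vietoris X) (\<lambda>C. C)" by (rule P1)
  next
    fix C assume "C \<in> topspace (irreducible_space X)"
    then show "vietoris_unit (lower_vietoris X) C = vietoris_map (lower_vietoris X) (vietoris_unit X) C"
      using P2[of C] tsD by (simp only: vietoris_unit_def[of "lower_vietoris X"] vietoris_map_def mem_Collect_eq)
  next
    fix Z :: "'z topology" and f
    assume A: "continuous_map Z (lower_vietoris X) f
        \<and> (\<forall>z\<in>topspace Z. vietoris_unit (lower_vietoris X) (f z)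
                          = vietoris_map (lower_vietoris X) (vietoris_unit X) (f z))"
    have "continuous_map Z (irreducible_space X) f"
      unfolding irreducible_space_def
    proof (rule continuous_map_into_subtopology)
      show "continuous_map Z (lower_vietoris X) f" using A by blast
      show "f \<in> topspace Z \<rightarrow> {C. irreducible_closed X C}"
      proof
        fix z assume "z \<in> topspace Z"
        then show "f z \<in> {C. irreducible_closed X C}" using A P3[of Z f z] by blast
      qed
    qed
    then show "\<exists>g. continuous_map Z (irreducible_space X) g
                \<and> (\<forall>z\<in>topspace Z. g z = f z)
                \<and> (\<forall>g'. continuous_map Z (irreducible_space X) g'
                        \<and> (\<forall>z\<in>topspace Z. g' z = f z)
                        \<longrightarrow> (\<forall>z\<in>topspace Z. g' z = g z))"
      by blast
  qed
qed

end
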